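(* (1) If $f_1,\dots,f_k\in\mathrm{CN}^n$ and $w_1,\dots,w_k\ge 0$, then $g(x)=\max_{1\le i\le k} w_i f_i(x)$ with $\mathrm{dom}(g)=\bigcap_{i}\mathrm{dom}(f_i)$ belongs to $\mathrm{CN}^n$. (2) If $f\in\mathrm{CN}^n$ and $h:\mathbb{R}\to\mathbb{R}$ is conic and non-decreasing, then $h\circ f\in\mathrm{CN}^n$. (3) If $f\in\mathrm{CN}^m$, $A\in\mathbb{R}^{m\times n}$, $b\in\mathbb{R}^m$, then $g(x)=f(Ax+b)$, with $\mathrm{dom}(g)=\{x: Ax+b\in\mathrm{dom}(f)\}$, belongs to $\mathrm{CN}^n$. (4) If $f_1,f_2\in\mathrm{CN}^n$ and $D=\mathrm{dom}(f_1)\cap\mathrm{dom}(f_2)$, then $g(x)=(f_1(x),f_2(x)):D\to\mathbb{R}^2$ is conic with respect to the lexicographic order on $\mathbb{R}^2$.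
   Context: A function $f:\mathrm{dom}(f)\to \Omega$, with $\mathrm{dom}(f)\subseteq\mathbb{R}^n$ convex and $\Omega$ a totally ordered set (e.g. $\mathbb{R}$, or $\mathbb{R}^2$ with lexicographic order), is conic if for all $y,z\in\mathrm{dom}(f)$ and all $t\ge 0$ with $f(y)\le f(z)$ and $z+t(z-y)\in\mathrm{dom}(f)$, we have $f(z+t(z-y))\ge f(z)$. $\mathrm{CN}^n$ denotes the class of real-valued conic functions with domain a convex subset of $\mathbb{R}^n$. *)

theory Defs
  imports "HOL-Analysis.Analysis"
begin

text \<open>A function is represented by its (convex) domain D together with a total
HOL function f, of which only the values on D matter. Conicity is defined
relative to a total order le on the codomain.\<close>

definition conic_wrt :: "('b \<Rightarrow> 'b \<Rightarrow> bool) \<Rightarrow> ('a::real_vector) set \<Rightarrow> ('a \<Rightarrow> 'b) \<Rightarrow> bool" where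
  "conic_wrt le D f \<longleftrightarrow> convex D \<and>
     (\<forall>y\<in>D. \<forall>z\<in>D. \<forall>t::real. t \<ge> 0 \<longrightarrow> le (f y) (f z) \<longrightarrow>
        z + t *\<^sub>R (z - y) \<in> D \<longrightarrow> le (f z) (f (z + t *\<^sub>R (z - y))))"

definition conic_on :: "('a::real_vector) set \<Rightarrow> ('a \<Rightarrow> 'b::linorder) \<Rightarrow> bool" where
  "conic_on D f \<longleftrightarrow> conic_wrt (\<le>) D f"

definition lex_le :: "real \<times> real \<Rightarrow> real \<times> real \<Rightarrow> bool" where
  "lex_le p q \<longleftrightarrow> fst p < fst q \<or> (fst p = fst q \<and> snd p \<le> snd q)"

end

theory Submission
  imports Defs
begin

lemma ray_back:
  fixes y z :: "'a::real_vector"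
  assumes "t > 0"
  shows "z + (1/t) *\<^sub>R (z - (z + t *\<^sub>R (z - y))) = y"
proof -
  have "z - (z + t *\<^sub>R (z - y)) = - (t *\<^sub>R (z - y))" by simp
  hence "(1/t) *\<^sub>R (z - (z + t *\<^sub>R (z - y))) = - (z - y)" using assms by simp
  thus ?thesis by (simp add: algebra_simps)
qed

lemma conic_rev:
  assumes c: "conic_wrt le D f" and y: "y \<in> D" and z: "z \<in> D" and t: "t > 0"
    and z': "z + t *\<^sub>R (z - y) \<in> D" and le: "le (f (z + t *\<^sub>R (z - y))) (f z)"
  shows "le (f z) (f y)"
proof -
  have "le (f z) (f (z + (1/t) *\<^sub>R (z - (z + t *\<^sub>R (z - y)))))"
  proof -
    have "\<forall>y\<in>D. \<forall>z\<in>D. \<forall>t::real. t \<ge> 0 \<longrightarrow> le (f y) (f z) \<longrightarrow>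
        z + t *\<^sub>R (z - y) \<in> D \<longrightarrow> le (f z) (f (z + t *\<^sub>R (z - y)))"
      using c unfolding conic_wrt_def by blast
    moreover have "1/t \<ge> 0" using t by simp
    moreover have "z + (1/t) *\<^sub>R (z - (z + t *\<^sub>R (z - y))) \<in> D" unfolding ray_back[OF t] by (rule y)
    ultimately show ?thesis using z' z le by blast
  qed
  thus ?thesis unfolding ray_back[OF t] .
qed

lemma part1:
  fixes D :: "nat \<Rightarrow> ('a::real_vector) set" and fs :: "nat \<Rightarrow> 'a \<Rightarrow> real"
  assumes k: "k \<ge> 1" and h: "\<forall>i\<in>{1..k}. conic_on (D i) (fs i) \<and> w i \<ge> 0"
  shows "conic_on (\<Inter>i\<in>{1..k}. D i) (\<lambda>x. Max ((\<lambda>i. w i * fs i x) ` {1..k}))"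
  unfolding conic_on_def conic_wrt_def
proof (intro conjI ballI allI impI)
  show "convex (\<Inter>i\<in>{1..k}. D i)"
    using h by (intro convex_INT) (auto simp: conic_on_def conic_wrt_def)
next
  fix y z and t :: real
  let ?g = "\<lambda>x. Max ((\<lambda>i. w i * fs i x) ` {1..k})"
  assume y: "y \<in> (\<Inter>i\<in>{1..k}. D i)" and z: "z \<in> (\<Inter>i\<in>{1..k}. D i)" and t: "0 \<le> t"
    and le: "?g y \<le> ?g z" and z': "z + t *\<^sub>R (z - y) \<in> (\<Inter>i\<in>{1..k}. D i)"
  have ne: "{1..k} \<noteq> {}" using k by auto
  obtain i where i: "i \<in> {1..k}" and gi: "?g z = w i * fs i z"
  proof -
    have "?g z \<in> (\<lambda>i. w i * fs i z) ` {1..k}" using ne by (intro Max_in) auto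
    thus ?thesis using that by blast
  qed
  have ub: "\<And>x j. j \<in> {1..k} \<Longrightarrow> w j * fs j x \<le> ?g x" by (intro Max_ge) auto
  have wi: "w i \<ge> 0" and ci: "conic_on (D i) (fs i)" using h i by auto
  have "w i * fs i (z + t *\<^sub>R (z - y)) \<ge> w i * fs i z"
  proof (cases "w i = 0")
    case False
    hence wp: "w i > 0" using wi by auto
    have "w i * fs i y \<le> w i * fs i z" using ub[OF i, of y] le gi by linarith
    hence "fs i y \<le> fs i z" using wp by simp
    hence "fs i z \<le> fs i (z + t *\<^sub>R (z - y))"
      using ci y z z' t i unfolding conic_on_def conic_wrt_def by blast
    thus ?thesis using wp by (simp add: mult_left_mono)
  qed simp
  thus "?g z \<le> ?g (z + t *\<^sub>R (z - y))" using gi ub[OF i, of "z + t *\<^sub>R (z - y)"] by linarith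
qed

lemma part2:
  fixes f :: "'a::real_vector \<Rightarrow> real" and h :: "real \<Rightarrow> real"
  assumes cf: "conic_on D f" and ch: "conic_on UNIV h" and m: "mono h"
  shows "conic_on D (h \<circ> f)"
  unfolding conic_on_def conic_wrt_def
proof (intro conjI ballI allI impI)
  show "convex D" using cf by (simp add: conic_on_def conic_wrt_def)
next
  fix y z and t :: real
  assume y: "y \<in> D" and z: "z \<in> D" and t: "0 \<le> t" and le: "(h \<circ> f) y \<le> (h \<circ> f) z"
    and z': "z + t *\<^sub>R (z - y) \<in> D"
  let ?z' = "z + t *\<^sub>R (z - y)"
  show "(h \<circ> f) z \<le> (h \<circ> f) ?z'"
  proof (cases "f y \<le> f z")
    case True
    hence "f z \<le> f ?z'" using cf y z z' t unfolding conic_on_def conic_wrt_def by blast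
    thus ?thesis using m by (simp add: mono_def)
  next
    case False
    show ?thesis
    proof (cases "f z \<le> f ?z'")
      case True thus ?thesis using m by (simp add: mono_def)
    next
      case F2: False
      define a where "a = f ?z'"
      define b where "b = f z"
      define c where "c = f y"
      have abc: "a < b" "b < c" using False F2 a_def b_def c_def by auto
      have hbc: "h c \<le> h b" using le b_def c_def by simp
      define s where "s = (b - a) / (c - b)"
      have s: "s \<ge> 0" using abc s_def by simp
      have "b + s * (b - c) = a" using abc unfolding s_def by (simp add: field_simps)
      have "h b \<le> h (b + s *\<^sub>R (b - c))" using ch hbc s
        unfolding conic_on_def conic_wrt_def by blast
      hence "h b \<le> h a" using \<open>b + s * (b - c) = a\<close> by simp
      thus ?thesis using a_def b_def by simp
    qed
  qed
qed

lemma part3: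
  fixes f :: "real^'m \<Rightarrow> real" and A :: "real^'n^'m"
  assumes cf: "conic_on D f"
  shows "conic_on {x. A *v x + b \<in> D} (\<lambda>x. f (A *v x + b))"
  unfolding conic_on_def conic_wrt_def
proof (intro conjI ballI allI impI)
  have cD: "convex D" using cf by (simp add: conic_on_def conic_wrt_def)
  have lin: "linear ((*v) A)" by (rule matrix_vector_mul_linear)
  have aff: "\<And>u v x y. u + v = 1 \<Longrightarrow> A *v (u *\<^sub>R x + v *\<^sub>R y) + b = u *\<^sub>R (A *v x + b) + v *\<^sub>R (A *v y + b)"
  proof -
    fix u v :: real and x y assume uv: "u + v = 1"
    have "A *v (u *\<^sub>R x + v *\<^sub>R y) = u *\<^sub>R (A *v x) + v *\<^sub>R (A *v y)"
      using lin by (simp add: linear_add linear_scale)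
    moreover have "b = u *\<^sub>R b + v *\<^sub>R b" using uv by (metis scaleR_add_left scaleR_one)
    ultimately show "A *v (u *\<^sub>R x + v *\<^sub>R y) + b = u *\<^sub>R (A *v x + b) + v *\<^sub>R (A *v y + b)"
      by (simp add: algebra_simps)
  qed
  show "convex {x. A *v x + b \<in> D}"
    unfolding convex_def using cD aff by (auto simp: convex_def)
next
  fix y z and t :: real
  assume y: "y \<in> {x. A *v x + b \<in> D}" and z: "z \<in> {x. A *v x + b \<in> D}" and t: "0 \<le> t"
    and le: "f (A *v y + b) \<le> f (A *v z + b)" and z': "z + t *\<^sub>R (z - y) \<in> {x. A *v x + b \<in> D}"
  have lin: "linear ((*v) A)" by (rule matrix_vector_mul_linear)
  have eq: "A *v (z + t *\<^sub>R (z - y)) + b = (A *v z + b) + t *\<^sub>R ((A *v z + b) - (A *v y + b))"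
    using lin by (simp add: linear_add linear_scale linear_diff algebra_simps)
  show "f (A *v z + b) \<le> f (A *v (z + t *\<^sub>R (z - y)) + b)"
    using cf y z z' t le unfolding conic_on_def conic_wrt_def eq by (metis mem_Collect_eq eq)
qed

lemma part4:
  fixes f1 f2 :: "'a::real_vector \<Rightarrow> real"
  assumes c1: "conic_on D1 f1" and c2: "conic_on D2 f2"
  shows "conic_wrt lex_le (D1 \<inter> D2) (\<lambda>x. (f1 x, f2 x))"
  unfolding conic_wrt_def
proof (intro conjI ballI allI impI)
  show "convex (D1 \<inter> D2)" using c1 c2 by (auto simp: conic_on_def conic_wrt_def intro: convex_Int)
next
  fix y z :: 'a and t :: real
  let ?z' = "z + t *\<^sub>R (z - y)"
  assume y: "y \<in> D1 \<inter> D2" and z: "z \<in> D1 \<inter> D2" and t: "0 \<le> t"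
    and le: "lex_le (f1 y, f2 y) (f1 z, f2 z)" and z': "?z' \<in> D1 \<inter> D2"
  have k1: "\<And>a b s. a \<in> D1 \<Longrightarrow> b \<in> D1 \<Longrightarrow> s \<ge> 0 \<Longrightarrow> f1 a \<le> f1 b \<Longrightarrow> b + s *\<^sub>R (b - a) \<in> D1 \<Longrightarrow> f1 b \<le> f1 (b + s *\<^sub>R (b - a))"
    using c1 unfolding conic_on_def conic_wrt_def by blast
  have k2: "\<And>a b s. a \<in> D2 \<Longrightarrow> b \<in> D2 \<Longrightarrow> s \<ge> 0 \<Longrightarrow> f2 a \<le> f2 b \<Longrightarrow> b + s *\<^sub>R (b - a) \<in> D2 \<Longrightarrow> f2 b \<le> f2 (b + s *\<^sub>R (b - a))"
    using c2 unfolding conic_on_def conic_wrt_def by blast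
  have f1le: "f1 y \<le> f1 z" using le by (auto simp: lex_le_def)
  hence g1: "f1 z \<le> f1 ?z'" using k1 y z z' t by blast
  show "lex_le (f1 z, f2 z) (f1 ?z', f2 ?z')"
  proof (cases "f1 z < f1 ?z'")
    case True thus ?thesis by (simp add: lex_le_def)
  next
    case False
    hence eq: "f1 ?z' = f1 z" using g1 by simp
    show ?thesis
    proof (cases "t = 0")
      case True thus ?thesis by (simp add: lex_le_def)
    next
      case tf: False
      hence tp: "t > 0" using t by simp
      have "f1 z \<le> f1 y"
        by (rule conic_rev[of "(\<le>)" D1 f1]) (use c1 y z z' tp eq in \<open>auto simp: conic_on_def\<close>)
      hence "f1 y = f1 z" using f1le by simp
      hence "f2 y \<le> f2 z" using le by (simp add: lex_le_def)
      hence "f2 z \<le> f2 ?z'" using k2 y z z' t by blast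
      thus ?thesis using eq by (simp add: lex_le_def)
    qed
  qed
qed

theorem mainTheorem3:
  shows "(\<forall>(k::nat) (D::nat \<Rightarrow> (real^'n) set) (fs::nat \<Rightarrow> real^'n \<Rightarrow> real) (w::nat \<Rightarrow> real).
            k \<ge> 1 \<and> (\<forall>i\<in>{1..k}. conic_on (D i) (fs i) \<and> w i \<ge> 0) \<longrightarrow>
            conic_on (\<Inter>i\<in>{1..k}. D i) (\<lambda>x. Max ((\<lambda>i. w i * fs i x) ` {1..k})))
       \<and> (\<forall>(D::(real^'n) set) (f::real^'n \<Rightarrow> real) (h::real \<Rightarrow> real).
            conic_on D f \<and> conic_on UNIV h \<and> mono h \<longrightarrow> conic_on D (h \<circ> f))
       \<and> (\<forall>(D::(real^'m) set) (f::real^'m \<Rightarrow> real) (A::real^'n^'m) (b::real^'m).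
            conic_on D f \<longrightarrow> conic_on {x. A *v x + b \<in> D} (\<lambda>x. f (A *v x + b)))
       \<and> (\<forall>(D1::(real^'n) set) (D2::(real^'n) set) (f1::real^'n \<Rightarrow> real) (f2::real^'n \<Rightarrow> real).
            conic_on D1 f1 \<and> conic_on D2 f2 \<longrightarrow>
            conic_wrt lex_le (D1 \<inter> D2) (\<lambda>x. (f1 x, f2 x)))"
  using part1 part2 part3 part4 by blast

end
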